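(* Let $\mathcal{G}=(V,E,p)$ be an uncertain graph, $k,l_m,\theta$ positive integers, and $G_1,\dots,G_\theta$ independently sampled possible worlds. Let $V_1,\dots,V_k$ be the true top-$k$ node sets among those of size at least $l_m$ that are closed w.r.t. $\gamma$ (i.e. they are such closed sets with $\gamma(V_1)\ge\dots\ge\gamma(V_k)\ge\gamma(U)$ for every other closed set $U$ with $|U|\ge l_m$). For each $i$, let $\mathbf{G}(V_i)$ be the set of possible worlds $G$ of $\mathcal{G}$ such that $V_i$ is contained in some densest subgraph of $G$, and let $\mathbb{G}=\bigcup_{i=1}^k\mathbf{G}(V_i)$. Then $$\Pr\big(V_1,\dots,V_k\text{ are all closed w.r.t. }\widehat\gamma\big)\ \ge\ 1-\sum_{G\in\mathbb{G}}\big(1-\Pr(G)\big)^\theta.$$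
   Context: An uncertain graph $\mathcal{G}=(V,E,p)$ has finite node set $V$, undirected edge set $E$, and $p:E\to(0,1]$; a possible world $G=(V,E_G)$, $E_G\subseteq E$, has probability $\Pr(G)=\prod_{e\in E_G}p(e)\prod_{e\in E\setminus E_G}(1-p(e))$. Edge density: $\rho(G[W])=|E_G[W]|/|W|$ for nonempty $W\subseteq V$, with $E_G[W]$ the edges of $G$ inside $W$. A densest subgraph of $G$ is a nonempty $W\subseteq V$ maximizing $\rho(G[W])$. The densest subgraph containment probability of $U\subseteq V$ is $\gamma(U)=\sum_G\Pr(G)\cdot\mathbb{1}[\exists\,U'\supseteq U:\ U'\text{ is a densest subgraph of }G]$. Given independent samples $G_1,\dots,G_\theta$ drawn from $\Pr$, $\widehat\gamma(U)=\frac1\theta\#\{i: U\text{ is contained in some densest subgraph of }G_i\}$. A set $U\subseteq V$ is closed w.r.t. a function $f$ on subsets of $V$ if no proper superset $U'\supsetneq U$, $U'\subseteq V$, has $f(U')=f(U)$. *)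

theory Defs
  imports Complex_Main
begin

text \<open>Uncertain graph (V,E,p): finite node set V, undirected edges as 2-element subsets of V,
  edge probabilities in (0,1]. A possible world is a subset F of E.\<close>

definition uncertain_graph :: "'a set \<Rightarrow> 'a set set \<Rightarrow> ('a set \<Rightarrow> real) \<Rightarrow> bool" where
  "uncertain_graph V E p \<longleftrightarrow> finite V \<and> (\<forall>e\<in>E. e \<subseteq> V \<and> card e = 2) \<and>
     (\<forall>e\<in>E. 0 < p e \<and> p e \<le> 1)"

definition world_prob :: "'a set set \<Rightarrow> ('a set \<Rightarrow> real) \<Rightarrow> 'a set set \<Rightarrow> real" where
  "world_prob E p F = (\<Prod>e\<in>F. p e) * (\<Prod>e\<in>E - F. 1 - p e)"

definition density :: "'a set set \<Rightarrow> 'a set \<Rightarrow> real" where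
  "density F W = real (card {e\<in>F. e \<subseteq> W}) / real (card W)"

definition is_densest :: "'a set \<Rightarrow> 'a set set \<Rightarrow> 'a set \<Rightarrow> bool" where
  "is_densest V F W \<longleftrightarrow> W \<noteq> {} \<and> W \<subseteq> V \<and>
     (\<forall>W'. W' \<noteq> {} \<and> W' \<subseteq> V \<longrightarrow> density F W' \<le> density F W)"

definition in_densest :: "'a set \<Rightarrow> 'a set set \<Rightarrow> 'a set \<Rightarrow> bool" where
  "in_densest V F U \<longleftrightarrow> (\<exists>U'. U \<subseteq> U' \<and> is_densest V F U')"

definition gamma :: "'a set \<Rightarrow> 'a set set \<Rightarrow> ('a set \<Rightarrow> real) \<Rightarrow> 'a set \<Rightarrow> real" where
  "gamma V E p U = (\<Sum>F\<in>Pow E. world_prob E p F * (if in_densest V F U then 1 else 0))"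

definition gamma_hat :: "'a set \<Rightarrow> 'a set set list \<Rightarrow> 'a set \<Rightarrow> real" where
  "gamma_hat V ss U = real (card {i. i < length ss \<and> in_densest V (ss ! i) U}) / real (length ss)"

definition closed_wrt :: "'a set \<Rightarrow> ('a set \<Rightarrow> real) \<Rightarrow> 'a set \<Rightarrow> bool" where
  "closed_wrt V f U \<longleftrightarrow> U \<subseteq> V \<and> (\<forall>U'. U \<subset> U' \<and> U' \<subseteq> V \<longrightarrow> f U' \<noteq> f U)"

text \<open>Probability, over theta independent samples of worlds, of an event on the sample list.\<close>
definition sample_prob :: "'a set set \<Rightarrow> ('a set \<Rightarrow> real) \<Rightarrow> nat \<Rightarrow> ('a set set list \<Rightarrow> bool) \<Rightarrow> real" where
  "sample_prob E p \<theta> P = (\<Sum>ss\<in>{ss\<in>lists (Pow E). length ss = \<theta>}.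
      (\<Prod>i<\<theta>. world_prob E p (ss ! i)) * (if P ss then 1 else 0))"

end

theory Submission
  imports Defs
begin

lemma lists_sum_pow:
  assumes "finite A"
  shows "(\<Sum>ss\<in>{ss\<in>lists A. length ss = n}. \<Prod>i<n. f (ss ! i)) = (sum f A :: real) ^ n"
proof (induction n)
  case 0
  have "{ss\<in>lists A. length ss = 0} = {[]}" by auto
  then show ?case by simp
next
  case (Suc n)
  have eq: "{ss\<in>lists A. length ss = Suc n} = (\<lambda>(a, xs). a # xs) ` (A \<times> {ss\<in>lists A. length ss = n})"
    by (auto simp: length_Suc_conv image_iff)
  have inj: "inj_on (\<lambda>(a, xs). a # xs) (A \<times> {ss\<in>lists A. length ss = n})"
    by (auto simp: inj_on_def)
  have "(\<Sum>ss\<in>{ss\<in>lists A. length ss = Suc n}. \<Prod>i<Suc n. f (ss ! i))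
      = (\<Sum>(a,xs)\<in>A \<times> {ss\<in>lists A. length ss = n}. f a * (\<Prod>i<n. f (xs ! i)))"
    unfolding eq by (subst sum.reindex[OF inj]) (simp add: prod.lessThan_Suc_shift[of _ n] case_prod_unfold del: prod.lessThan_Suc)
  also have "\<dots> = sum f A * (\<Sum>xs\<in>{ss\<in>lists A. length ss = n}. \<Prod>i<n. f (xs ! i))"
    by (simp add: sum_product sum.cartesian_product)
  finally show ?case using Suc by simp
qed

lemma world_prob_sum:
  assumes "finite E"
  shows "(\<Sum>F\<in>Pow E. world_prob E p F) = 1"
  using prod_add[OF assms, of p "\<lambda>e. 1 - p e"] by (simp add: world_prob_def)

lemma world_prob_nonneg:
  assumes "\<forall>e\<in>E. 0 < p e \<and> p e \<le> 1" "F \<subseteq> E"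
  shows "world_prob E p F \<ge> 0"
  unfolding world_prob_def using assms
  by (intro mult_nonneg_nonneg prod_nonneg) (auto, meson less_le subsetD)

lemma closed_hat:
  assumes th: "length ss > 0"
    and cl: "closed_wrt V (gamma V E p) A"
    and all: "\<forall>F\<in>Pow E. in_densest V F A \<longrightarrow> F \<in> set ss"
  shows "closed_wrt V (gamma_hat V ss) A"
  unfolding closed_wrt_def
proof (intro conjI allI impI)
  show "A \<subseteq> V" using cl by (simp add: closed_wrt_def)
  fix U' assume U': "A \<subset> U' \<and> U' \<subseteq> V"
  have ne: "gamma V E p U' \<noteq> gamma V E p A" using cl U' by (simp add: closed_wrt_def)
  have mono: "\<And>F. in_densest V F U' \<Longrightarrow> in_densest V F A"
    using U' unfolding in_densest_def by blast
  obtain F where F: "F \<in> Pow E" "in_densest V F A" "\<not> in_densest V F U'"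
  proof (rule ccontr)
    assume "\<not> thesis"
    then have "\<forall>F\<in>Pow E. in_densest V F A = in_densest V F U'" using that mono by blast
    then have "gamma V E p U' = gamma V E p A" unfolding gamma_def
      by (intro sum.cong) auto
    with ne show False by simp
  qed
  then have "F \<in> set ss" using all by blast
  then obtain j where j: "j < length ss" "ss ! j = F" by (auto simp: in_set_conv_nth)
  let ?S1 = "{i. i < length ss \<and> in_densest V (ss ! i) U'}"
  let ?S2 = "{i. i < length ss \<and> in_densest V (ss ! i) A}"
  have "?S1 \<subset> ?S2" using mono j F by auto
  moreover have "finite ?S2" by simp
  ultimately have "card ?S1 < card ?S2" by (rule psubset_card_mono[rotated])
  then show "gamma_hat V ss U' \<noteq> gamma_hat V ss A"
    unfolding gamma_hat_def using th by (simp add: divide_right_mono)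
qed

theorem theorem4:
  fixes V :: "'a set" and E :: "'a set set" and p :: "'a set \<Rightarrow> real"
    and k lm \<theta> :: nat and Vs :: "nat \<Rightarrow> 'a set"
  assumes ug: "uncertain_graph V E p"
    and pos: "k > 0" "lm > 0" "\<theta> > 0"
    and top_closed: "\<forall>i<k. closed_wrt V (gamma V E p) (Vs i) \<and> card (Vs i) \<ge> lm"
    and top_distinct: "inj_on Vs {..<k}"
    and top_sorted: "\<forall>i j. i \<le> j \<and> j < k \<longrightarrow> gamma V E p (Vs j) \<le> gamma V E p (Vs i)"
    and top_max: "\<forall>U. closed_wrt V (gamma V E p) U \<and> card U \<ge> lm \<and> U \<notin> Vs ` {..<k}
                     \<longrightarrow> gamma V E p U \<le> gamma V E p (Vs (k - 1))"
  shows "sample_prob E p \<theta> (\<lambda>ss. \<forall>i<k. closed_wrt V (gamma_hat V ss) (Vs i))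
         \<ge> 1 - (\<Sum>F\<in>(\<Union>i<k. {F\<in>Pow E. in_densest V F (Vs i)}). (1 - world_prob E p F) ^ \<theta>)"
proof -
  define GG where "GG = (\<Union>i<k. {F\<in>Pow E. in_densest V F (Vs i)})"
  define S where "S = {ss\<in>lists (Pow E). length ss = \<theta>}"
  define w where "w ss = (\<Prod>i<\<theta>. world_prob E p (ss ! i))" for ss
  have pr: "\<forall>e\<in>E. 0 < p e \<and> p e \<le> 1" using ug by (simp add: uncertain_graph_def)
  have "E \<subseteq> Pow V" using ug by (auto simp: uncertain_graph_def)
  then have finE: "finite E" using ug by (auto simp: uncertain_graph_def intro: finite_subset)
  have finS: "finite S" unfolding S_def using finE
    using finite_lists_length_eq[of "Pow E" \<theta>] by (simp add: in_lists_conv_set Ball_def subset_iff)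
  have finGG: "finite GG" unfolding GG_def using finE by auto
  have GGsub: "GG \<subseteq> Pow E" unfolding GG_def by auto
  have wnn: "w ss \<ge> 0" if "ss \<in> S" for ss
    unfolding w_def using that world_prob_nonneg[OF pr] unfolding S_def
    by (intro prod_nonneg) (auto simp: in_lists_conv_set)
  have tot: "(\<Sum>ss\<in>S. w ss) = 1"
  proof -
    have "(\<Sum>ss\<in>S. w ss) = (sum (world_prob E p) (Pow E)) ^ \<theta>"
      unfolding S_def w_def using finE by (intro lists_sum_pow) simp
    then show ?thesis using world_prob_sum[OF finE, of p] by simp
  qed
  have miss: "(\<Sum>ss\<in>S. w ss * (if F \<notin> set ss then 1 else 0)) = (1 - world_prob E p F) ^ \<theta>"
    if F: "F \<in> Pow E" for F
  proof -
    have "(\<Sum>ss\<in>S. w ss * (if F \<notin> set ss then 1 else 0)) = (\<Sum>ss\<in>{ss\<in>S. F \<notin> set ss}. w ss)"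
      unfolding sum.inter_filter[OF finS] by (rule sum.cong) auto
    also have "{ss\<in>S. F \<notin> set ss} = {ss\<in>lists (Pow E - {F}). length ss = \<theta>}"
      unfolding S_def by auto
    also have "(\<Sum>ss\<in>\<dots>. w ss) = (sum (world_prob E p) (Pow E - {F})) ^ \<theta>"
      unfolding w_def using finE by (intro lists_sum_pow) auto
    also have "sum (world_prob E p) (Pow E - {F}) = 1 - world_prob E p F"
      using world_prob_sum[OF finE, of p] F finE by (simp add: sum_diff1)
    finally show ?thesis .
  qed
  have point: "w ss * (if (\<forall>i<k. closed_wrt V (gamma_hat V ss) (Vs i)) then 1 else 0)
      \<ge> w ss - (\<Sum>F\<in>GG. w ss * (if F \<notin> set ss then 1 else 0))" if ss: "ss \<in> S" for ss
  proof (cases "\<forall>F\<in>GG. F \<in> set ss")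
    case True
    have "\<forall>i<k. closed_wrt V (gamma_hat V ss) (Vs i)"
    proof (intro allI impI)
      fix i assume i: "i < k"
      show "closed_wrt V (gamma_hat V ss) (Vs i)"
        apply (rule closed_hat)
        using ss pos(3) top_closed i True unfolding S_def GG_def by auto
    qed
    then show ?thesis using True wnn[OF ss] by (simp add: sum_nonneg)
  next
    case False
    then obtain F where F: "F \<in> GG" "F \<notin> set ss" by blast
    have "w ss = w ss * (if F \<notin> set ss then 1 else 0)" using F by simp
    also have "\<dots> \<le> (\<Sum>F\<in>GG. w ss * (if F \<notin> set ss then 1 else 0))"
      using F finGG wnn[OF ss]
      by (intro member_le_sum) auto
    finally show ?thesis using wnn[OF ss] by simp
  qed
  have "1 - (\<Sum>F\<in>GG. (1 - world_prob E p F) ^ \<theta>)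
      = (\<Sum>ss\<in>S. w ss) - (\<Sum>F\<in>GG. \<Sum>ss\<in>S. w ss * (if F \<notin> set ss then 1 else 0))"
    using tot miss GGsub by (metis (no_types, lifting) subsetD sum.cong)
  also have "\<dots> = (\<Sum>ss\<in>S. w ss - (\<Sum>F\<in>GG. w ss * (if F \<notin> set ss then 1 else 0)))"
    by (simp add: sum_subtractf sum.swap[of _ GG S])
  also have "\<dots> \<le> (\<Sum>ss\<in>S. w ss * (if (\<forall>i<k. closed_wrt V (gamma_hat V ss) (Vs i)) then 1 else 0))"
    using point by (intro sum_mono) auto
  finally show ?thesis unfolding sample_prob_def GG_def S_def w_def .
qed

end
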